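(* Let $N\ge 1$ and let $\phi: H_0(S_N)\to M_N$ be the quotient morphism of monoids sending $\pi_i\mapsto\pi_i$, where $M_N$ is the quotient of $H_0(S_N)$ by the additional relations $\pi_i\pi_{i+1}\pi_i=\pi_i\pi_{i+1}$ for $1\le i\le N-2$. For every $m\in M_N$, consider the fiber $F_m=\{w\in S_N:\ \phi(\pi_w)=m\}$. Every nonempty fiber $F_m$ contains a unique $[321]$-avoiding permutation, and it is of minimal length among the elements of $F_m$; and $F_m$ contains a unique $[231]$-avoiding permutation, and it is of maximal length among the elements of $F_m$.
   Context: $S_N$ is the symmetric group generated by the simple transpositions $s_1,\dots,s_{N-1}$. Permutations are written in one-line notation $x=[x(1),\dots,x(N)]$ and composed as functions, $(uv)(j)=u(v(j))$, so $xs_i$ is obtained from $x$ by swapping the entries in positions $i,i+1$. The length $\operatorname{len}(x)$ is the length of a reduced (minimal-length) word for $x$ in the $s_i$, i.e. the number of inversions. The $0$-Hecke monoid $H_0(S_N)$ is generated by $\pi_1,\dots,\pi_{N-1}$ with relations $\pi_i^2=\pi_i$, $\pi_i\pi_j=\pi_j\pi_i$ for $|i-j|\ge2$, $\pi_i\pi_{i+1}\pi_i=\pi_{i+1}\pi_i\pi_{i+1}$; its elements are $\pi_w:=\pi_{i_1}\cdots\pi_{i_k}$ for $w\in S_N$, where $w=s_{i_1}\cdots s_{i_k}$ is any reduced word, and $w\mapsto \pi_w$ is a bijection. A permutation $x$ contains a pattern $\sigma\in S_k$ if some subsequence $x(i_1),\dots,x(i_k)$ with $i_1<\dots<i_k$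 is in the same relative order as $\sigma(1),\dots,\sigma(k)$; otherwise $x$ avoids $\sigma$. The monoid $M_N$ is isomorphic to the monoid $\operatorname{NDPF}_N$ of order-preserving, regressive ($f(x)\le x$) maps of $\{1,\dots,N\}$, with $\pi_i$ the map sending $i+1\mapsto i$ and fixing all other points. *)

theory Defs
  imports "HOL-Combinatorics.Combinatorics"
begin

(* Permutations of {1..N} are functions nat => nat that permute {1..N}.
   Composition is function composition: (u o v) j = u (v j). *)

definition perms :: "nat \<Rightarrow> (nat \<Rightarrow> nat) set" where
  "perms N = {x. x permutes {1..N}}"

definition s :: "nat \<Rightarrow> nat \<Rightarrow> nat" where
  "s i = Transposition.transpose i (Suc i)"

definition words :: "nat \<Rightarrow> nat list set" where
  "words N = {ws. set ws \<subseteq> {1..<N}}"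

definition perm_of_word :: "nat list \<Rightarrow> nat \<Rightarrow> nat" where
  "perm_of_word ws = foldr (\<lambda>i f. s i \<circ> f) ws id"

definition len :: "nat \<Rightarrow> (nat \<Rightarrow> nat) \<Rightarrow> nat" where
  "len N x = card {(i, j). 1 \<le> i \<and> i < j \<and> j \<le> N \<and> x i > x j}"

definition reduced_word :: "nat \<Rightarrow> (nat \<Rightarrow> nat) \<Rightarrow> nat list \<Rightarrow> bool" where
  "reduced_word N w ws \<longleftrightarrow> ws \<in> words N \<and> perm_of_word ws = w \<and> length ws = len N w"

(* defining relations of M_N: those of H_0(S_N) plus pi_i pi_{i+1} pi_i = pi_i pi_{i+1} *)
definition rels :: "nat \<Rightarrow> (nat list \<times> nat list) set" where
  "rels N =
     {([i, i], [i]) | i. 1 \<le> i \<and> i < N}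
   \<union> {([i, j], [j, i]) | i j. 1 \<le> i \<and> i < N \<and> 1 \<le> j \<and> j < N \<and> (i + 2 \<le> j \<or> j + 2 \<le> i)}
   \<union> {([i, Suc i, i], [Suc i, i, Suc i]) | i. 1 \<le> i \<and> Suc i < N}
   \<union> {([i, Suc i, i], [i, Suc i]) | i. 1 \<le> i \<and> Suc i < N}"

definition step :: "nat \<Rightarrow> (nat list \<times> nat list) set" where
  "step N = {(u @ l @ v, u @ r @ v) | u l r v. (l, r) \<in> rels N \<or> (r, l) \<in> rels N}"

definition cong :: "nat \<Rightarrow> (nat list \<times> nat list) set" where
  "cong N = (step N)\<^sup>*"

definition monoidM :: "nat \<Rightarrow> nat list set set" where
  "monoidM N = words N // cong N"

(* fiber F_m = {w in S_N. phi(pi_w) = m}; phi(pi_w) is the class of any reduced word of w *)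
definition fiber :: "nat \<Rightarrow> nat list set \<Rightarrow> (nat \<Rightarrow> nat) set" where
  "fiber N m = {w \<in> perms N. \<exists>ws. reduced_word N w ws \<and> ws \<in> m}"

(* pattern containment; pattern sigma in S_k given in one-line notation as a list *)
definition contains :: "nat \<Rightarrow> (nat \<Rightarrow> nat) \<Rightarrow> nat list \<Rightarrow> bool" where
  "contains N x \<sigma> \<longleftrightarrow> (\<exists>idx :: nat \<Rightarrow> nat.
      (\<forall>a < length \<sigma>. 1 \<le> idx a \<and> idx a \<le> N) \<and>
      (\<forall>a b. a < b \<and> b < length \<sigma> \<longrightarrow> idx a < idx b) \<and>
      (\<forall>a < length \<sigma>. \<forall>b < length \<sigma>. x (idx a) < x (idx b) \<longleftrightarrow> \<sigma> ! a < \<sigma> ! b))"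

definition avoids :: "nat \<Rightarrow> (nat \<Rightarrow> nat) \<Rightarrow> nat list \<Rightarrow> bool" where
  "avoids N x \<sigma> \<longleftrightarrow> \<not> contains N x \<sigma>"

end

theory Submission
  imports Defs
begin


definition fi :: "nat \<Rightarrow> nat \<Rightarrow> nat" where "fi i = (\<lambda>x. if x = Suc i then i else x)"
definition ev :: "nat list \<Rightarrow> nat \<Rightarrow> nat" where "ev ws = foldr (\<lambda>i f. fi i \<circ> f) ws id"

lemma ev_Nil[simp]: "ev [] = id" by (simp add: ev_def)
lemma ev_Cons[simp]: "ev (i # ws) = fi i \<circ> ev ws" by (simp add: ev_def)
lemma ev_append: "ev (xs @ ys) = ev xs \<circ> ev ys" by (induction xs) auto

lemma rels_ev: "(l,r) \<in> rels N \<Longrightarrow> ev l = ev r"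
  unfolding rels_def by (auto simp: fi_def fun_eq_iff)

lemma step_ev: "(a,b) \<in> step N \<Longrightarrow> ev a = ev b"
  unfolding step_def using rels_ev by (force simp: ev_append)

lemma cong_ev: "(a,b) \<in> cong N \<Longrightarrow> ev a = ev b"
  unfolding cong_def by (induction rule: rtrancl_induct) (auto dest: step_ev)

lemma step_ctx: "(a,b) \<in> step N \<Longrightarrow> (u@a@v, u@b@v) \<in> step N"
  unfolding step_def by auto (metis append.assoc)+

lemma cong_ctx: "(a,b) \<in> cong N \<Longrightarrow> (u@a@v, u@b@v) \<in> cong N"
  unfolding cong_def
  by (induction rule: rtrancl_induct) (auto intro: rtrancl_into_rtrancl step_ctx)

lemma step_sym: "(a,b) \<in> step N \<Longrightarrow> (b,a) \<in> step N"
  unfolding step_def by blast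

lemma cong_sym: "(a,b) \<in> cong N \<Longrightarrow> (b,a) \<in> cong N"
  unfolding cong_def
  by (induction rule: rtrancl_induct) (auto intro: converse_rtrancl_into_rtrancl step_sym)

lemma cong_trans: "(a,b) \<in> cong N \<Longrightarrow> (b,c) \<in> cong N \<Longrightarrow> (a,c) \<in> cong N"
  unfolding cong_def by (rule rtrancl_trans)

lemma cong_refl[simp]: "(a,a) \<in> cong N" unfolding cong_def by simp

lemma rel_cong: "(l,r) \<in> rels N \<Longrightarrow> (l, r) \<in> cong N"
proof -
  assume "(l,r) \<in> rels N"
  hence "([]@l@[], []@r@[]) \<in> step N" unfolding step_def by blast
  thus ?thesis unfolding cong_def by auto
qed

lemma cong_ctxL: "(a,b) \<in> cong N \<Longrightarrow> (u@a, u@b) \<in> cong N"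
  using cong_ctx[of a b N u "[]"] by simp
lemma cong_ctxR: "(a,b) \<in> cong N \<Longrightarrow> (a@v, b@v) \<in> cong N"
  using cong_ctx[of a b N "[]" v] by simp

lemma r_idem: "1 \<le> i \<Longrightarrow> i < N \<Longrightarrow> ([i,i],[i]) \<in> cong N"
  by (rule rel_cong) (auto simp: rels_def)
lemma r_comm: "1 \<le> i \<Longrightarrow> i < N \<Longrightarrow> 1 \<le> j \<Longrightarrow> j < N \<Longrightarrow> i + 2 \<le> j \<or> j + 2 \<le> i
   \<Longrightarrow> ([i,j],[j,i]) \<in> cong N"
  by (rule rel_cong) (auto simp: rels_def)
lemma r_br1: "1 \<le> i \<Longrightarrow> Suc i < N \<Longrightarrow> ([i,Suc i,i],[i,Suc i]) \<in> cong N"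
  by (rule rel_cong) (auto simp: rels_def)
lemma r_br2: "1 \<le> i \<Longrightarrow> Suc i < N \<Longrightarrow> ([Suc i,i,Suc i],[i,Suc i]) \<in> cong N"
proof -
  assume a: "1 \<le> i" "Suc i < N"
  have "([i,Suc i,i],[Suc i,i,Suc i]) \<in> cong N" by (rule rel_cong) (use a in \<open>auto simp: rels_def\<close>)
  thus ?thesis using cong_sym cong_trans r_br1[OF a] by blast
qed

definition okc :: "nat \<Rightarrow> nat \<Rightarrow> nat \<Rightarrow> bool" where
  "okc N i j \<longleftrightarrow> 1 \<le> i \<and> i < N \<and> 1 \<le> j \<and> j < N \<and> (i + 2 \<le> j \<or> j + 2 \<le> i)"

lemma comm_word: "(\<forall>x\<in>set ws. okc N j x) \<Longrightarrow> (ws @ [j], j # ws) \<in> cong N"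
proof (induction ws)
  case Nil then show ?case by simp
next
  case (Cons x ws)
  have "(x # ws @ [j], x # j # ws) \<in> cong N" using Cons cong_ctxL[of _ _ N "[x]"] by auto
  moreover have "([x,j] @ ws, [j,x] @ ws) \<in> cong N"
    using Cons.prems by (intro cong_ctxR r_comm) (auto simp: okc_def)
  ultimately show ?case using cong_trans by fastforce
qed

lemma comm_words: "(\<forall>x\<in>set ws. \<forall>y\<in>set vs. okc N y x) \<Longrightarrow> (ws @ vs, vs @ ws) \<in> cong N"
proof (induction vs arbitrary: ws)
  case Nil then show ?case by simp
next
  case (Cons y vs)
  have h: "(ws @ [y], y # ws) \<in> cong N" using comm_word[of ws N y] Cons.prems by auto
  have "((ws @ [y]) @ vs, y # ws @ vs) \<in> cong N"
    using cong_ctxR[OF h, of vs] by simp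
  moreover have "(y # ws @ vs, y # vs @ ws) \<in> cong N"
    using Cons cong_ctxL[of _ _ N "[y]"] by auto
  ultimately show ?case using cong_trans by fastforce
qed

definition cg :: "nat \<Rightarrow> nat list \<Rightarrow> nat list \<Rightarrow> bool" where "cg N a b \<longleftrightarrow> (a,b) \<in> cong N"

lemma cg_refl[simp]: "cg N a a" by (simp add: cg_def)
lemma cg_sym: "cg N a b \<Longrightarrow> cg N b a" by (simp add: cg_def cong_sym)
lemma cg_trans[trans]: "cg N a b \<Longrightarrow> cg N b c \<Longrightarrow> cg N a c" unfolding cg_def by (rule cong_trans)
lemma cg_ctx: "cg N a b \<Longrightarrow> cg N (u@a@v) (u@b@v)" by (simp add: cg_def cong_ctx)
lemma cg_ctxL: "cg N a b \<Longrightarrow> cg N (u@a) (u@b)" by (simp add: cg_def cong_ctxL)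
lemma cg_ctxR: "cg N a b \<Longrightarrow> cg N (a@v) (b@v)" by (simp add: cg_def cong_ctxR)

lemma absorb: "1 \<le> a \<Longrightarrow> a \<le> j \<Longrightarrow> j < b \<Longrightarrow> b \<le> N \<Longrightarrow> cg N ([a..<b] @ [j]) [a..<b]"
proof (induction b)
  case 0 then show ?case by simp
next
  case (Suc b)
  have ab: "[a..<Suc b] = [a..<b] @ [b]" using Suc.prems by simp
  show ?case
  proof (cases "j = b")
    case True
    have "cg N [b,b] [b]" using r_idem[of b N] Suc.prems by (simp add: cg_def)
    from cg_ctxL[OF this, of "[a..<b]"] show ?thesis using ab True by simp
  next
    case False
    hence jb: "j < b" using Suc.prems by simp
    show ?thesis
    proof (cases "Suc j = b")
      case True
      have aj: "[a..<b] = [a..<j] @ [j]" using Suc.prems by (simp add: True[symmetric])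
      have "cg N [j, Suc j, j] [j, Suc j]" using r_br1[of j N] Suc.prems True by (simp add: cg_def)
      from cg_ctxL[OF this, of "[a..<j]"] show ?thesis using ab aj True by simp
    next
      case False
      have "cg N [b,j] [j,b]" using r_comm[of b N j] Suc.prems jb False by (simp add: cg_def)
      from cg_ctxL[OF this, of "[a..<b]"]
      have "cg N ([a..<Suc b] @ [j]) (([a..<b] @ [j]) @ [b])" using ab by simp
      also have "cg N (([a..<b] @ [j]) @ [b]) ([a..<b] @ [b])"
        using Suc jb by (intro cg_ctxR) simp
      finally show ?thesis using ab by simp
    qed
  qed
qed

lemma absorb_many: "1 \<le> a \<Longrightarrow> b \<le> N \<Longrightarrow> set vs \<subseteq> {a..<b} \<Longrightarrow> cg N ([a..<b] @ vs) [a..<b]"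
proof (induction vs rule: rev_induct)
  case Nil then show ?case by simp
next
  case (snoc x vs)
  have "cg N (([a..<b] @ vs) @ [x]) ([a..<b] @ [x])" using snoc by (intro cg_ctxR) auto
  also have "cg N ([a..<b] @ [x]) [a..<b]" using snoc by (intro absorb) auto
  finally show ?case by simp
qed

lemma lemC: "1 \<le> a \<Longrightarrow> a < b \<Longrightarrow> b \<le> N \<Longrightarrow> cg N ([Suc a..<b] @ a # [Suc a..<b]) [a..<b]"
proof (induction b)
  case 0 then show ?case by simp
next
  case (Suc b)
  show ?case
  proof (cases "b = a")
    case True then show ?thesis by simp
  next
    case False
    hence ab: "a < b" using Suc.prems by simp
    have e1: "[Suc a..<Suc b] = [Suc a..<b] @ [b]" using ab by simp
    have e2: "[a..<Suc b] = [a..<b] @ [b]" using ab by simp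
    show ?thesis
    proof (cases "b = Suc a")
      case True
      have "cg N [Suc a, a, Suc a] [a, Suc a]" using r_br2[of a N] Suc.prems True by (simp add: cg_def)
      then show ?thesis using True by simp
    next
      case False
      define Y where "Y = [Suc a..<b - 1]"
      have eX: "[Suc a..<b] = Y @ [b - 1]" using False ab unfolding Y_def
        by (cases b) auto
      have sub: "Suc (b - 1) = b" using ab by simp
      have "\<forall>x\<in>set (a # Y). okc N b x" using False ab Suc.prems unfolding Y_def okc_def by auto
      from comm_word[OF this] have c1: "cg N ([b] @ (a # Y)) ((a # Y) @ [b])"
        by (simp add: cg_def cong_sym)
      have "[Suc a..<Suc b] @ a # [Suc a..<Suc b] = (Y @ [b - 1]) @ ([b] @ (a # Y)) @ [b - 1, b]"
        using e1 eX by simp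
      also have "cg N \<dots> ((Y @ [b - 1]) @ ((a # Y) @ [b]) @ [b - 1, b])"
        by (rule cg_ctx[OF c1])
      also have "\<dots> = (Y @ [b - 1] @ a # Y) @ [b, b - 1, b]" by simp
      also have "cg N \<dots> ((Y @ [b - 1] @ a # Y) @ [b - 1, b])"
      proof -
        have "cg N [Suc (b-1), b-1, Suc (b-1)] [b-1, Suc (b-1)]"
          using r_br2[of "b-1" N] Suc.prems False ab by (simp add: cg_def)
        thus ?thesis using sub by (intro cg_ctxL) simp
      qed
      also have "\<dots> = ([Suc a..<b] @ a # [Suc a..<b]) @ [b]" using eX by simp
      also have "cg N \<dots> ([a..<b] @ [b])" using Suc ab by (intro cg_ctxR) simp
      finally show ?thesis using e2 by simp
    qed
  qed
qed

lemma lemLHS: "1 \<le> k' \<Longrightarrow> k' \<le> k \<Longrightarrow> k \<le> n \<Longrightarrow> n \<le> N \<Longrightarrow> cg N ([k..<n] @ [k'..<n]) [k'..<n]"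
proof (cases "k' = k")
  case True
  assume "1 \<le> k'" "n \<le> N"
  hence "cg N ([k'..<n] @ [k'..<n]) [k'..<n]" by (intro absorb_many) auto
  then show ?thesis using True by simp
next
  case False
  assume a: "1 \<le> k'" "k' \<le> k" "k \<le> n" "n \<le> N"
  hence kk: "k' < k" using False by simp
  have e: "[k'..<n] = [k'..<k-1] @ (k-1) # [k..<n]"
  proof -
    have "[k'..<(k-1) + (n-(k-1))] = [k'..<k-1] @ [k-1..<(k-1) + (n-(k-1))]" using kk a by (intro upt_add_eq_append) auto
    hence "[k'..<n] = [k'..<k-1] @ [k-1..<n]" using kk a by simp
    moreover have "[k-1..<n] = (k-1) # [k..<n]" using kk a by (subst upt_conv_Cons) auto
    ultimately show ?thesis by simp
  qed
  have "\<forall>x\<in>set [k..<n]. \<forall>y\<in>set [k'..<k-1]. okc N y x" using a kk unfolding okc_def by auto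
  from comm_words[OF this] have c: "cg N ([k..<n] @ [k'..<k-1]) ([k'..<k-1] @ [k..<n])" by (simp add: cg_def)
  have "[k..<n] @ [k'..<n] = ([k..<n] @ [k'..<k-1]) @ (k-1) # [k..<n]" using e by simp
  also have "cg N \<dots> (([k'..<k-1] @ [k..<n]) @ (k-1) # [k..<n])" by (rule cg_ctxR[OF c])
  also have "\<dots> = [k'..<k-1] @ ([Suc (k-1)..<n] @ (k-1) # [Suc (k-1)..<n])" using kk by simp
  also have "cg N \<dots> ([k'..<k-1] @ [k-1..<n])" using a kk by (intro cg_ctxL lemC) auto
  also have "\<dots> = [k'..<n]" using e kk a by (simp add: upt_conv_Cons)
  finally show ?thesis .
qed

fun cw :: "(nat \<Rightarrow> nat) \<Rightarrow> nat \<Rightarrow> nat list" where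
  "cw f 0 = []" | "cw f (Suc n) = [f (Suc n)..<Suc n] @ cw f n"

definition ndpf :: "nat \<Rightarrow> (nat \<Rightarrow> nat) \<Rightarrow> bool" where
  "ndpf n f \<longleftrightarrow> (\<forall>j. 1 \<le> j \<and> j \<le> n \<longrightarrow> 1 \<le> f j \<and> f j \<le> j) \<and> (\<forall>a b. 1 \<le> a \<and> a \<le> b \<and> b \<le> n \<longrightarrow> f a \<le> f b)"

lemma ndpf_le: "ndpf n f \<Longrightarrow> m \<le> n \<Longrightarrow> ndpf m f" unfolding ndpf_def by auto

lemma ndpf_comp: "ndpf n f \<Longrightarrow> ndpf n g \<Longrightarrow> ndpf n (f \<circ> g)"
  unfolding ndpf_def by (auto, meson le_trans, meson le_trans)

lemma ndpf_fi: "1 \<le> i \<Longrightarrow> ndpf n (fi i)" unfolding ndpf_def fi_def by auto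
lemma ndpf_id: "ndpf n id" unfolding ndpf_def by auto

lemma ndpf_ev: "ws \<in> words N \<Longrightarrow> ndpf N (ev ws)"
  by (induction ws) (auto simp: words_def ndpf_id intro!: ndpf_comp ndpf_fi)

lemma cw_set: "ndpf n f \<Longrightarrow> set (cw f n) \<subseteq> {1..<n}"
proof (induction n)
  case 0 then show ?case by simp
next
  case (Suc n)
  have "ndpf n f" using Suc.prems ndpf_le by auto
  with Suc.IH have "set (cw f n) \<subseteq> {1..<n}" by simp
  moreover have "1 \<le> f (Suc n)" using Suc.prems unfolding ndpf_def by auto
  ultimately show ?case by auto
qed

lemma cw_cong: "(\<forall>j. 1 \<le> j \<and> j \<le> n \<longrightarrow> f j = g j) \<Longrightarrow> cw f n = cw g n"
  by (induction n) auto

lemma cw_id: "cw id n = []" by (induction n) auto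

lemma key: "ndpf n f \<Longrightarrow> n \<le> N \<Longrightarrow> 1 \<le> i \<Longrightarrow> i < n \<Longrightarrow> cg N (cw f n @ [i]) (cw (f \<circ> fi i) n)"
proof (induction n)
  case 0 then show ?case by simp
next
  case (Suc n)
  have nd: "ndpf n f" using Suc.prems ndpf_le by auto
  show ?case
  proof (cases "i < n")
    case True
    have "cw f (Suc n) @ [i] = [f (Suc n)..<Suc n] @ (cw f n @ [i])" by simp
    also have "cg N \<dots> ([f (Suc n)..<Suc n] @ cw (f \<circ> fi i) n)"
    proof (rule cg_ctxL)
      have "Suc n \<le> N" using Suc.prems by simp
      hence "n \<le> N" by simp
      from Suc.IH[OF nd this \<open>1 \<le> i\<close> True] show "cg N (cw f n @ [i]) (cw (f \<circ> fi i) n)" .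
    qed
    also have "\<dots> = cw (f \<circ> fi i) (Suc n)" using True by (simp add: fi_def)
    finally show ?thesis .
  next
    case False
    hence i: "i = n" using Suc.prems by simp
    obtain p where p: "n = Suc p" using Suc.prems i by (cases n) auto
    have fn: "1 \<le> f n" "f n \<le> n" "f n \<le> f (Suc n)" "f (Suc n) \<le> Suc n"
      using Suc.prems i unfolding ndpf_def by auto
    have sp: "set (cw f p) \<subseteq> {1..<p}" using cw_set ndpf_le nd p by auto
    have "\<forall>x\<in>set (cw f p). okc N n x" using sp Suc.prems i p unfolding okc_def by auto
    from comm_word[OF this] have c: "cg N (cw f p @ [n]) (n # cw f p)" by (simp add: cg_def)
    have "cw f (Suc n) @ [i] = ([f (Suc n)..<Suc n] @ [f n..<n]) @ (cw f p @ [n])" using p i by simp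
    also have "cg N \<dots> (([f (Suc n)..<Suc n] @ [f n..<n]) @ (n # cw f p))" by (rule cg_ctxL[OF c])
    also have "\<dots> = ([f (Suc n)..<Suc n] @ [f n..<Suc n]) @ cw f p" using fn by simp
    also have "cg N \<dots> ([f n..<Suc n] @ cw f p)" using fn Suc.prems by (intro cg_ctxR lemLHS) auto
    also have "cg N \<dots> (([f n..<Suc n] @ [f n..<n]) @ cw f p)"
    proof -
      have "cg N ([f n..<Suc n] @ [f n..<n]) [f n..<Suc n]" using fn Suc.prems by (intro absorb_many) auto
      hence "cg N (([f n..<Suc n] @ [f n..<n]) @ cw f p) ([f n..<Suc n] @ cw f p)" by (rule cg_ctxR)
      thus ?thesis by (rule cg_sym)
    qed
    also have "\<dots> = [f n..<Suc n] @ cw f n" using p by simp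
    also have "cw f n = cw (f \<circ> fi i) n" using i by (intro cw_cong) (auto simp: fi_def)
    also have "[f n..<Suc n] @ cw (f \<circ> fi i) n = cw (f \<circ> fi i) (Suc n)" using i by (simp add: fi_def)
    finally show ?thesis .
  qed
qed

lemma word_cw: "ws \<in> words N \<Longrightarrow> cg N ws (cw (ev ws) N)"
proof (induction ws rule: rev_induct)
  case Nil
  have "cw (ev []) N = []" using cw_id[of N] by (simp only: ev_Nil)
  then show ?case by (simp only: cg_refl)
next
  case (snoc i ws)
  have w: "ws \<in> words N" and i: "1 \<le> i" "i < N" using snoc.prems by (auto simp: words_def)
  have "cg N (ws @ [i]) (cw (ev ws) N @ [i])" using snoc.IH w by (intro cg_ctxR) auto
  also have "cg N \<dots> (cw (ev ws \<circ> fi i) N)" using ndpf_ev[OF w] i by (intro key) auto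
  also have "ev ws \<circ> fi i = ev (ws @ [i])" by (simp add: ev_append)
  finally show ?case .
qed

lemma words_cong: "ws \<in> words N \<Longrightarrow> vs \<in> words N \<Longrightarrow> (\<forall>j. 1 \<le> j \<and> j \<le> N \<longrightarrow> ev ws j = ev vs j)
   \<Longrightarrow> (ws, vs) \<in> cong N"
proof -
  assume a: "ws \<in> words N" "vs \<in> words N" "\<forall>j. 1 \<le> j \<and> j \<le> N \<longrightarrow> ev ws j = ev vs j"
  have "cg N ws (cw (ev ws) N)" by (rule word_cw[OF a(1)])
  also have "cw (ev ws) N = cw (ev vs) N" using a(3) by (rule cw_cong)
  also have "cg N \<dots> vs" using word_cw[OF a(2)] by (rule cg_sym)
  finally show ?thesis by (simp add: cg_def)
qed



lemma s_apply: "s i a = (if a = i then Suc i else if a = Suc i then i else a)"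
  by (simp add: s_def Transposition.transpose_def)

lemma s_s: "s i \<circ> s i = id" by (simp add: s_def)
lemma s_s': "s i (s i a) = a" by (simp add: s_apply)

lemma bij_s: "bij (s i)" by (simp add: s_def)

lemma pow_append: "perm_of_word (xs @ ys) = perm_of_word xs \<circ> perm_of_word ys"
  by (induction xs) (auto simp: perm_of_word_def)

lemma pow_single: "perm_of_word [i] = s i" by (simp add: perm_of_word_def)
lemma pow_snoc: "perm_of_word (xs @ [i]) = perm_of_word xs \<circ> s i"
  by (simp only: pow_append pow_single)

lemma pow_Nil: "perm_of_word [] = id" by (simp add: perm_of_word_def)
lemma pow_Cons: "perm_of_word (i#ws) = s i \<circ> perm_of_word ws" by (simp add: perm_of_word_def)

lemma inj_pow: "inj (perm_of_word ws)"
proof (induction ws)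
  case Nil then show ?case by (simp add: pow_Nil)
next
  case (Cons i ws) then show ?case unfolding pow_Cons by (rule inj_compose[OF bij_is_inj[OF bij_s]])
qed

definition Inv :: "nat \<Rightarrow> (nat \<Rightarrow> nat) \<Rightarrow> (nat \<times> nat) set" where
  "Inv N x = {(a,b). 1 \<le> a \<and> a < b \<and> b \<le> N \<and> x a > x b}"

lemma len_Inv: "len N x = card (Inv N x)" by (simp add: len_def Inv_def)

lemma finite_Inv: "finite (Inv N x)"
  by (rule finite_subset[of _ "{1..N} \<times> {1..N}"]) (auto simp: Inv_def)

lemma inv_mem1: "x i < x (Suc i) \<Longrightarrow> 1 \<le> i \<Longrightarrow> Suc i \<le> N \<Longrightarrow> (a,b) \<in> Inv N x
   \<Longrightarrow> (s i a, s i b) \<in> Inv N (x \<circ> s i)"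
  by (auto simp: Inv_def s_apply)

lemma inv_mem2: "1 \<le> i \<Longrightarrow> Suc i \<le> N \<Longrightarrow> (c,d) \<in> Inv N (x \<circ> s i) \<Longrightarrow> (c,d) \<noteq> (i, Suc i)
   \<Longrightarrow> (s i c, s i d) \<in> Inv N x"
  by (auto simp: Inv_def s_apply split: if_splits)

lemma len_step: assumes "x i < x (Suc i)" "1 \<le> i" "Suc i \<le> N"
  shows "len N (x \<circ> s i) = Suc (len N x)"
proof -
  let ?g = "\<lambda>(a,b). (s i a, s i b)"
  have e: "Inv N (x \<circ> s i) = insert (i, Suc i) (?g ` Inv N x)"
  proof
    show "Inv N (x \<circ> s i) \<subseteq> insert (i, Suc i) (?g ` Inv N x)"
    proof
      fix p assume p: "p \<in> Inv N (x \<circ> s i)"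
      obtain c d where cd: "p = (c,d)" by (cases p)
      show "p \<in> insert (i, Suc i) (?g ` Inv N x)"
      proof (cases "p = (i, Suc i)")
        case False
        hence "(s i c, s i d) \<in> Inv N x" using inv_mem2 assms p cd by auto
        moreover have "p = ?g (s i c, s i d)" using cd by (simp add: s_s')
        ultimately show ?thesis by blast
      qed simp
    qed
    have "(i,Suc i) \<in> Inv N (x \<circ> s i)" using assms by (simp add: Inv_def s_apply)
    moreover have "?g ` Inv N x \<subseteq> Inv N (x \<circ> s i)" using inv_mem1[OF assms] by auto
    ultimately show "insert (i, Suc i) (?g ` Inv N x) \<subseteq> Inv N (x \<circ> s i)" by auto
  qed
  have ni: "(i, Suc i) \<notin> ?g ` Inv N x"
  proof
    assume "(i, Suc i) \<in> ?g ` Inv N x"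
    then obtain a b where "(a,b) \<in> Inv N x" "s i a = i" "s i b = Suc i" by auto
    hence "a = Suc i" "b = i" by (auto simp: s_apply split: if_splits)
    thus False using \<open>(a,b) \<in> Inv N x\<close> by (auto simp: Inv_def)
  qed
  have inj: "inj_on ?g (Inv N x)"
    by (rule inj_onI) (auto simp: s_apply split: if_splits)
  show ?thesis unfolding len_Inv e using ni inj finite_Inv
    by (simp add: card_image finite_Inv)
qed

lemma len_step': assumes "x i \<noteq> x (Suc i)" "1 \<le> i" "Suc i \<le> N"
  shows "len N (x \<circ> s i) = Suc (len N x) \<or> len N x = Suc (len N (x \<circ> s i))"
proof (cases "x i < x (Suc i)")
  case True then show ?thesis using len_step assms by auto
next
  case False
  hence "(x \<circ> s i) i < (x \<circ> s i) (Suc i)" using assms by (simp add: s_apply)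
  from len_step[OF this assms(2,3)] have "len N ((x \<circ> s i) \<circ> s i) = Suc (len N (x \<circ> s i))" .
  moreover have "(x \<circ> s i) \<circ> s i = x" by (metis comp_assoc s_s comp_id)
  ultimately show ?thesis by simp
qed

lemma len_le: "ws \<in> words N \<Longrightarrow> len N (perm_of_word ws) \<le> length ws"
proof (induction ws rule: rev_induct)
  case Nil
  have "Inv N id = {}" by (auto simp: Inv_def)
  then show ?case by (simp only: pow_Nil len_Inv card.empty)
next
  case (snoc i ws)
  have w: "ws \<in> words N" and i: "1 \<le> i" "Suc i \<le> N" using snoc.prems by (auto simp: words_def)
  have "perm_of_word ws i \<noteq> perm_of_word ws (Suc i)" using inj_pow[of ws] by (auto dest: injD)
  from len_step'[OF this i] have d: "len N (perm_of_word ws \<circ> s i) = Suc (len N (perm_of_word ws)) \<or>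
      len N (perm_of_word ws) = Suc (len N (perm_of_word ws \<circ> s i))" .
  have ih: "len N (perm_of_word ws) \<le> length ws" using snoc.IH w by blast
  from d show ?case unfolding pow_snoc length_append_singleton
  proof
    assume "len N (perm_of_word ws \<circ> s i) = Suc (len N (perm_of_word ws))"
    then show "len N (perm_of_word ws \<circ> s i) \<le> Suc (length ws)" using ih by linarith
  next
    assume "len N (perm_of_word ws) = Suc (len N (perm_of_word ws \<circ> s i))"
    then show "len N (perm_of_word ws \<circ> s i) \<le> Suc (length ws)" using ih by linarith
  qed
qed

definition gm :: "nat \<Rightarrow> (nat \<Rightarrow> nat) \<Rightarrow> nat \<Rightarrow> nat" where "gm N w j = Min (w ` {j..N})"

lemma Min_img_eq:
  fixes u v :: "nat \<Rightarrow> nat" and N j j' :: nat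
  assumes "j \<le> N" "j' \<le> N"
    and "\<forall>k\<in>{j..N}. \<exists>k'\<in>{j'..N}. v k' \<le> u k" and "\<forall>k'\<in>{j'..N}. \<exists>k\<in>{j..N}. u k \<le> v k'"
  shows "Min (u ` {j..N}) = Min (v ` {j'..N})"
proof (rule antisym)
  have "j \<in> {j..N}" "j' \<in> {j'..N}" using assms(1,2) by auto
  hence ne: "u ` {j..N} \<noteq> {}" "v ` {j'..N} \<noteq> {}" by blast+
  obtain k where k: "k \<in> {j..N}" "Min (u ` {j..N}) = u k" using Min_in[OF _ ne(1)] by auto
  obtain k' where k': "k' \<in> {j'..N}" "Min (v ` {j'..N}) = v k'" using Min_in[OF _ ne(2)] by auto
  from assms(4) k'(1) obtain k2 where "k2 \<in> {j..N}" "u k2 \<le> v k'" by blast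
  hence "Min (u ` {j..N}) \<le> u k2" by (intro Min_le) auto
  thus "Min (u ` {j..N}) \<le> Min (v ` {j'..N})" using k' \<open>u k2 \<le> v k'\<close> by simp
  from assms(3) k(1) obtain k3 where "k3 \<in> {j'..N}" "v k3 \<le> u k" by blast
  hence "Min (v ` {j'..N}) \<le> v k3" by (intro Min_le) auto
  thus "Min (v ` {j'..N}) \<le> Min (u ` {j..N})" using k \<open>v k3 \<le> u k\<close> by simp
qed

lemma gm_step:
  assumes "u i < u (Suc i)" "1 \<le> i" "Suc i \<le> N" "1 \<le> j" "j \<le> N"
  shows "gm N (u \<circ> s i) j = gm N u (fi i j)"
proof (cases "j = Suc i")
  case True
  have "Min (u ` {i..N}) = Min ((u \<circ> s i) ` {Suc i..N})"
  proof (rule Min_img_eq)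
    show "\<forall>k\<in>{i..N}. \<exists>k'\<in>{Suc i..N}. (u \<circ> s i) k' \<le> u k"
    proof
      fix k assume k: "k \<in> {i..N}"
      show "\<exists>k'\<in>{Suc i..N}. (u \<circ> s i) k' \<le> u k"
        by (rule bexI[of _ "if k = i \<or> k = Suc i then Suc i else k"]) (use k assms in \<open>auto simp: s_apply\<close>)
    qed
    show "\<forall>k'\<in>{Suc i..N}. \<exists>k\<in>{i..N}. u k \<le> (u \<circ> s i) k'"
    proof
      fix k assume k: "k \<in> {Suc i..N}"
      show "\<exists>k'\<in>{i..N}. u k' \<le> (u \<circ> s i) k"
        by (rule bexI[of _ "s i k"]) (use k assms in \<open>auto simp: s_apply\<close>)
    qed
  qed (use assms in auto)
  then show ?thesis using True by (simp add: gm_def fi_def)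
next
  case False
  have "Min (u ` {j..N}) = Min ((u \<circ> s i) ` {j..N})"
  proof (rule Min_img_eq)
    show "\<forall>k\<in>{j..N}. \<exists>k'\<in>{j..N}. (u \<circ> s i) k' \<le> u k"
    proof
      fix k assume k: "k \<in> {j..N}"
      show "\<exists>k'\<in>{j..N}. (u \<circ> s i) k' \<le> u k"
        by (rule bexI[of _ "s i k"]) (use k assms False in \<open>auto simp: s_apply\<close>)
    qed
    show "\<forall>k'\<in>{j..N}. \<exists>k\<in>{j..N}. u k \<le> (u \<circ> s i) k'"
    proof
      fix k assume k: "k \<in> {j..N}"
      show "\<exists>k'\<in>{j..N}. u k' \<le> (u \<circ> s i) k"
        by (rule bexI[of _ "s i k"]) (use k assms False in \<open>auto simp: s_apply\<close>)
    qed
  qed (use assms in auto)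
  then show ?thesis using False by (simp add: gm_def fi_def)
qed

lemma Min_interval: "j \<le> N \<Longrightarrow> Min {j..N} = (j::nat)" by (rule Min_eqI) auto

lemma red_gm: "reduced_word N w ws \<Longrightarrow> 1 \<le> j \<Longrightarrow> j \<le> N \<Longrightarrow> ev ws j = gm N w j"
proof (induction ws arbitrary: w j rule: rev_induct)
  case Nil
  hence "w = id" by (simp add: reduced_word_def pow_Nil)
  then show ?case using Nil by (simp add: gm_def Min_interval)
next
  case (snoc i us)
  define u where "u = perm_of_word us"
  have us: "us \<in> words N" and i: "1 \<le> i" "Suc i \<le> N" using snoc.prems by (auto simp: reduced_word_def words_def)
  have w: "w = u \<circ> s i" using snoc.prems by (simp add: reduced_word_def pow_snoc u_def)
  have lw: "len N w = Suc (length us)" using snoc.prems by (simp add: reduced_word_def)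
  have lu: "len N u \<le> length us" using len_le[OF us] by (simp add: u_def)
  have ne: "u i \<noteq> u (Suc i)" using inj_pow[of us] by (auto simp: u_def dest: injD)
  have lt: "u i < u (Suc i)"
  proof (rule ccontr)
    assume "\<not> u i < u (Suc i)"
    hence "w i < w (Suc i)" using ne w by (simp add: s_apply)
    from len_step[OF this i] have "len N (w \<circ> s i) = Suc (len N w)" .
    moreover have "w \<circ> s i = u" using w by (metis comp_assoc s_s comp_id)
    ultimately show False using lw lu by simp
  qed
  have "len N w = Suc (len N u)" using len_step[OF lt i] w by simp
  hence ru: "reduced_word N u us" using lw us by (simp add: reduced_word_def u_def)
  have fj: "1 \<le> fi i j" "fi i j \<le> N" using snoc.prems i by (auto simp: fi_def)
  have "ev (us @ [i]) j = ev us (fi i j)" by (simp add: ev_append)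
  also have "\<dots> = gm N u (fi i j)" using snoc.IH[OF ru fj] .
  also have "\<dots> = gm N w j" using gm_step[OF lt i] snoc.prems w by simp
  finally show ?case .
qed

lemma nodesc_id:
  assumes p: "w permutes {1..N}" and nd: "\<forall>i. 1 \<le> i \<longrightarrow> Suc i \<le> N \<longrightarrow> w i < w (Suc i)"
  shows "w = id"
proof -
  have rng: "\<And>j. 1 \<le> j \<Longrightarrow> j \<le> N \<Longrightarrow> 1 \<le> w j \<and> w j \<le> N"
    using permutes_in_image[OF p] by auto
  have up: "\<forall>j. 1 \<le> j \<and> j \<le> N \<longrightarrow> j \<le> w j"
  proof
    fix j show "1 \<le> j \<and> j \<le> N \<longrightarrow> j \<le> w j"
    proof (induction j)
      case (Suc j)
      show ?case
      proof
        assume a: "1 \<le> Suc j \<and> Suc j \<le> N"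
        show "Suc j \<le> w (Suc j)"
        proof (cases "j = 0")
          case True then show ?thesis using rng a by auto
        next
          case False
          hence "j \<le> w j" using Suc a by auto
          moreover have "w j < w (Suc j)" using nd a False by auto
          ultimately show ?thesis by simp
        qed
      qed
    qed simp
  qed
  have dn: "\<forall>t. t < N \<longrightarrow> w (N - t) \<le> N - t"
  proof
    fix t show "t < N \<longrightarrow> w (N - t) \<le> N - t"
    proof (induction t)
      case 0 then show ?case using rng by auto
    next
      case (Suc t)
      show ?case
      proof
        assume "Suc t < N"
        hence "w (N - Suc t) < w (Suc (N - Suc t))" using nd by auto
        moreover have "Suc (N - Suc t) = N - t" using \<open>Suc t < N\<close> by simp
        ultimately show "w (N - Suc t) \<le> N - Suc t" using Suc \<open>Suc t < N\<close> by simp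
      qed
    qed
  qed
  show ?thesis
  proof
    fix j show "w j = id j"
    proof (cases "1 \<le> j \<and> j \<le> N")
      case True
      have "N - j < N" using True by simp
      hence "w (N - (N - j)) \<le> N - (N - j)" using dn by blast
      moreover have "N - (N - j) = j" using True by simp
      ultimately have "w j \<le> j" by simp
      then show ?thesis using up True by fastforce
    next
      case False then show ?thesis using permutes_not_in[OF p] by auto
    qed
  qed
qed

lemma s_permutes: "1 \<le> i \<Longrightarrow> Suc i \<le> N \<Longrightarrow> s i permutes {1..N}"
  unfolding s_def by (rule permutes_swap_id) auto

lemma len_id: "len N id = 0"
proof -
  have "Inv N id = {}" by (auto simp: Inv_def)
  thus ?thesis by (simp only: len_Inv card.empty)
qed

lemma exists_red: "w permutes {1..N} \<Longrightarrow> \<exists>ws. reduced_word N w ws"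
proof (induction "len N w" arbitrary: w rule: less_induct)
  case less
  show ?case
  proof (cases "\<exists>i. 1 \<le> i \<and> Suc i \<le> N \<and> w (Suc i) < w i")
    case True
    then obtain i where i: "1 \<le> i" "Suc i \<le> N" "w (Suc i) < w i" by auto
    define v where "v = w \<circ> s i"
    have vp: "v permutes {1..N}" unfolding v_def using s_permutes[OF i(1,2)] less.prems
      by (rule permutes_compose)
    have vl: "v i < v (Suc i)" using i by (simp add: v_def s_apply)
    have vw: "v \<circ> s i = w" unfolding v_def by (metis comp_assoc s_s comp_id)
    have lv: "len N w = Suc (len N v)" using len_step[OF vl i(1,2)] vw by simp
    then obtain vs where vs: "reduced_word N v vs" using less.hyps[of v] vp by auto
    have "reduced_word N w (vs @ [i])"
      using vs i lv vw by (auto simp: reduced_word_def words_def pow_snoc)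
    then show ?thesis by blast
  next
    case False
    have "\<forall>i. 1 \<le> i \<longrightarrow> Suc i \<le> N \<longrightarrow> w i < w (Suc i)"
    proof (intro allI impI)
      fix i assume "1 \<le> i" "Suc i \<le> N"
      moreover have "w i \<noteq> w (Suc i)" using permutes_inj[OF less.prems] by (auto dest: injD)
      ultimately show "w i < w (Suc i)" using False by (meson linorder_neqE_nat)
    qed
    hence "w = id" using nodesc_id less.prems by blast
    hence "reduced_word N w []" by (simp add: reduced_word_def words_def pow_Nil len_id)
    then show ?thesis by blast
  qed
qed



lemma fiber_char:
  assumes m: "m \<in> monoidM N" and w0: "w0 \<in> fiber N m"
  shows "fiber N m = {w \<in> perms N. \<forall>j. 1 \<le> j \<and> j \<le> N \<longrightarrow> gm N w j = gm N w0 j}"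
proof -
  obtain x where x: "x \<in> words N" "m = cong N `` {x}" using m unfolding monoidM_def by (auto elim: quotientE)
  obtain ws0 where ws0: "reduced_word N w0 ws0" "ws0 \<in> m" using w0 by (auto simp: fiber_def)
  have xw0: "(x, ws0) \<in> cong N" using ws0 x by auto
  show ?thesis
  proof
    show "fiber N m \<subseteq> {w \<in> perms N. \<forall>j. 1 \<le> j \<and> j \<le> N \<longrightarrow> gm N w j = gm N w0 j}"
    proof
      fix w assume w: "w \<in> fiber N m"
      then obtain ws where ws: "reduced_word N w ws" "ws \<in> m" and wp: "w \<in> perms N" by (auto simp: fiber_def)
      have "(x, ws) \<in> cong N" using ws x by auto
      hence "ev x = ev ws" by (rule cong_ev)
      moreover have "ev x = ev ws0" using xw0 by (rule cong_ev)
      ultimately have e: "ev ws = ev ws0" by simp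
      have "\<forall>j. 1 \<le> j \<and> j \<le> N \<longrightarrow> gm N w j = gm N w0 j"
      proof (intro allI impI)
        fix j assume j: "1 \<le> j \<and> j \<le> N"
        have "gm N w j = ev ws j" using red_gm[OF ws(1)] j by simp
        also have "\<dots> = ev ws0 j" using e by simp
        also have "\<dots> = gm N w0 j" using red_gm[OF ws0(1)] j by simp
        finally show "gm N w j = gm N w0 j" .
      qed
      thus "w \<in> {w \<in> perms N. \<forall>j. 1 \<le> j \<and> j \<le> N \<longrightarrow> gm N w j = gm N w0 j}" using wp by simp
    qed
    show "{w \<in> perms N. \<forall>j. 1 \<le> j \<and> j \<le> N \<longrightarrow> gm N w j = gm N w0 j} \<subseteq> fiber N m"
    proof
      fix w assume w: "w \<in> {w \<in> perms N. \<forall>j. 1 \<le> j \<and> j \<le> N \<longrightarrow> gm N w j = gm N w0 j}"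
      then obtain ws where ws: "reduced_word N w ws" using exists_red[of w N] by (auto simp: perms_def)
      have "\<forall>j. 1 \<le> j \<and> j \<le> N \<longrightarrow> ev ws0 j = ev ws j"
        using red_gm[OF ws] red_gm[OF ws0(1)] w by auto
      hence "(ws0, ws) \<in> cong N" using ws ws0 by (intro words_cong) (auto simp: reduced_word_def)
      hence "(x, ws) \<in> cong N" using xw0 cong_trans by blast
      hence "ws \<in> m" using x by auto
      thus "w \<in> fiber N m" using ws w by (auto simp: fiber_def)
    qed
  qed
qed

lemma gm_le: "j \<le> k \<Longrightarrow> k \<le> N \<Longrightarrow> gm N w j \<le> w k"
  unfolding gm_def by (rule Min_le) auto

lemma gm_in: "j \<le> N \<Longrightarrow> \<exists>k. j \<le> k \<and> k \<le> N \<and> gm N w j = w k"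
proof -
  assume "j \<le> N"
  hence "w ` {j..N} \<noteq> {}" by auto
  from Min_in[OF _ this] show ?thesis unfolding gm_def by auto
qed

lemma gm_rec: "j < N \<Longrightarrow> gm N w j = min (w j) (gm N w (Suc j))"
proof -
  assume "j < N"
  hence "{j..N} = insert j {Suc j..N}" by auto
  hence "w ` {j..N} = insert (w j) (w ` {Suc j..N})" by auto
  moreover have "w ` {Suc j..N} \<noteq> {}" using \<open>j < N\<close> by auto
  ultimately show ?thesis unfolding gm_def by (simp add: Min_insert)
qed

lemma gm_N: "gm N w N = w N" unfolding gm_def by simp

definition nr :: "nat \<Rightarrow> (nat \<Rightarrow> nat) \<Rightarrow> nat \<Rightarrow> bool" where
  "nr N w q \<longleftrightarrow> (\<exists>k. q < k \<and> k \<le> N \<and> w k < w q)"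

lemma nr_char:
  assumes "inj w" "1 \<le> q" "q \<le> N"
  shows "nr N w q \<longleftrightarrow> q < N \<and> gm N w q = gm N w (Suc q)"
    and "\<not> nr N w q \<Longrightarrow> w q = gm N w q"
proof -
  have A: "nr N w q \<Longrightarrow> q < N \<and> gm N w q = gm N w (Suc q)"
  proof -
    assume "nr N w q"
    then obtain k where k: "q < k" "k \<le> N" "w k < w q" by (auto simp: nr_def)
    hence le: "gm N w (Suc q) \<le> w k" by (intro gm_le) auto
    have qN: "q < N" using k by simp
    have "gm N w q = min (w q) (gm N w (Suc q))" using gm_rec[OF qN] .
    also have "\<dots> = gm N w (Suc q)" using le k(3) by simp
    finally show ?thesis using qN by simp
  qed
  have B: "\<not> nr N w q \<Longrightarrow> w q = gm N w q \<and> (q < N \<longrightarrow> gm N w q \<noteq> gm N w (Suc q))"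
  proof -
    assume n: "\<not> nr N w q"
    show ?thesis
    proof (cases "q < N")
      case True
      obtain k where k: "Suc q \<le> k" "k \<le> N" "gm N w (Suc q) = w k" using gm_in[of "Suc q" N w] True by auto
      have "k \<noteq> q" using k by simp
      hence "w k \<noteq> w q" by (simp add: inj_eq[OF assms(1)])
      hence "w q < w k" using n k by (auto simp: nr_def)
      moreover have "gm N w q = min (w q) (gm N w (Suc q))" using gm_rec[OF True] .
      ultimately show ?thesis using k by simp
    next
      case False
      hence "q = N" using assms(3) by simp
      then show ?thesis using gm_N[of N w] by simp
    qed
  qed
  show "nr N w q \<longleftrightarrow> q < N \<and> gm N w q = gm N w (Suc q)"
  proof
    show "nr N w q \<Longrightarrow> q < N \<and> gm N w q = gm N w (Suc q)" by (rule A)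
    show "q < N \<and> gm N w q = gm N w (Suc q) \<Longrightarrow> nr N w q"
    proof (rule ccontr)
      assume "q < N \<and> gm N w q = gm N w (Suc q)" "\<not> nr N w q"
      with B show False by simp
    qed
  qed
  show "\<not> nr N w q \<Longrightarrow> w q = gm N w q"
  proof -
    assume "\<not> nr N w q"
    from B[OF this] show ?thesis by simp
  qed
qed

lemma same_nr:
  assumes v: "v \<in> perms N" and w: "w \<in> perms N"
    and g: "\<forall>j. 1 \<le> j \<and> j \<le> N \<longrightarrow> gm N v j = gm N w j" and q: "1 \<le> q" "q \<le> N"
  shows "nr N v q \<longleftrightarrow> nr N w q" and "\<not> nr N v q \<Longrightarrow> v q = w q"
proof -
  have iv: "inj v" and iw: "inj w" using v w by (auto simp: perms_def permutes_inj)
  have e1: "gm N v q = gm N w q" using g q by auto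
  have e2: "q < N \<Longrightarrow> gm N v (Suc q) = gm N w (Suc q)" using g q by auto
  show C1: "nr N v q \<longleftrightarrow> nr N w q" using nr_char(1)[OF iv q] nr_char(1)[OF iw q] e1 e2 by auto
  show "\<not> nr N v q \<Longrightarrow> v q = w q"
  proof -
    assume n: "\<not> nr N v q"
    hence "\<not> nr N w q" using C1 by simp
    thus ?thesis using n nr_char(2)[OF iv q] nr_char(2)[OF iw q] e1 by simp
  qed
qed

lemma tr_apply: "Transposition.transpose x y a = (if a = x then y else if a = y then x else a)"
  by (simp add: Transposition.transpose_def)

lemma swap_perm: "w \<in> perms N \<Longrightarrow> 1 \<le> x \<Longrightarrow> x \<le> N \<Longrightarrow> 1 \<le> y \<Longrightarrow> y \<le> N
   \<Longrightarrow> w \<circ> Transposition.transpose x y \<in> perms N"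
  unfolding perms_def by (auto intro!: permutes_compose permutes_swap_id)

lemma swap_gm:
  assumes "1 \<le> x" "x < y" "y < z" "z \<le> N" "w z < w x" "w z < w y" "1 \<le> j" "j \<le> N"
  shows "gm N (w \<circ> Transposition.transpose x y) j = gm N w j"
  unfolding gm_def
proof (rule Min_img_eq)
  let ?t = "Transposition.transpose x y"
  show "\<forall>k\<in>{j..N}. \<exists>k'\<in>{j..N}. w k' \<le> (w \<circ> ?t) k"
  proof
    fix k assume k: "k \<in> {j..N}"
    show "\<exists>k'\<in>{j..N}. w k' \<le> (w \<circ> ?t) k"
      by (rule bexI[of _ "if j \<le> x then ?t k else if k = y then z else k"])
        (use k assms in \<open>auto simp: tr_apply\<close>)
  qed
  show "\<forall>k\<in>{j..N}. \<exists>k'\<in>{j..N}. (w \<circ> ?t) k' \<le> w k"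
  proof
    fix k assume k: "k \<in> {j..N}"
    show "\<exists>k'\<in>{j..N}. (w \<circ> ?t) k' \<le> w k"
      by (rule bexI[of _ "if j \<le> x then ?t k else if k = y then z else k"])
        (use k assms in \<open>auto simp: tr_apply\<close>)
  qed
qed (use assms in auto)

lemma swap_len:
  assumes "1 \<le> x" "x < y" "y \<le> N" "w y < w x"
  shows "len N (w \<circ> Transposition.transpose x y) < len N w"
proof -
  let ?t = "Transposition.transpose x y"
  define \<phi> where "\<phi> = (\<lambda>(a::nat,b::nat). if (x < a \<and> a < y) \<or> (x < b \<and> b < y) then (a,b) else (?t a, ?t b))"
  have sub: "\<phi> ` Inv N (w \<circ> ?t) \<subseteq> Inv N w - {(x,y)}"
  proof
    fix p assume "p \<in> \<phi> ` Inv N (w \<circ> ?t)"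
    then obtain a b where ab: "(a,b) \<in> Inv N (w \<circ> ?t)" "p = \<phi> (a,b)" by auto
    have i: "1 \<le> a" "a < b" "b \<le> N" "w (?t b) < w (?t a)" using ab(1) by (auto simp: Inv_def)
    show "p \<in> Inv N w - {(x,y)}"
      using i assms unfolding ab(2) \<phi>_def by (auto simp: Inv_def tr_apply split: if_splits)
  qed
  have inj: "inj_on \<phi> (Inv N (w \<circ> ?t))"
  proof (rule inj_onI)
    fix p p' assume "p \<in> Inv N (w \<circ> ?t)" "p' \<in> Inv N (w \<circ> ?t)" "\<phi> p = \<phi> p'"
    obtain a b a' b' where "p = (a,b)" "p' = (a',b')" by (cases p, cases p')
    with \<open>\<phi> p = \<phi> p'\<close> show "p = p'" using assms
      unfolding \<phi>_def by (auto simp: tr_apply split: if_splits)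
  qed
  have xy: "(x,y) \<in> Inv N w" using assms by (auto simp: Inv_def)
  have "len N (w \<circ> ?t) = card (\<phi> ` Inv N (w \<circ> ?t))" using inj by (simp add: len_Inv card_image)
  also have "\<dots> \<le> card (Inv N w - {(x,y)})" using sub finite_Inv by (intro card_mono) auto
  also have "\<dots> < card (Inv N w)" using xy finite_Inv[of N w] by (rule card_Diff1_less[rotated])
  finally show ?thesis by (simp add: len_Inv)
qed

lemma all3: "(\<forall>t<(3::nat). P t) \<longleftrightarrow> P 0 \<and> P 1 \<and> P 2"
  by (auto simp: numeral_3_eq_3 numeral_2_eq_2 less_Suc_eq)

lemma all3b: "(\<forall>a b. a < b \<and> b < (3::nat) \<longrightarrow> Q a b) \<longleftrightarrow> Q 0 1 \<and> Q 0 2 \<and> Q 1 2"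
  by (auto simp: numeral_3_eq_3 numeral_2_eq_2 less_Suc_eq)

lemma contains3: "length \<sigma> = 3 \<Longrightarrow> contains N w \<sigma> \<longleftrightarrow> (\<exists>a b c. 1 \<le> a \<and> a < b \<and> b < c \<and> c \<le> N \<and>
    (\<forall>i<3. \<forall>j<3. w ([a,b,c] ! i) < w ([a,b,c] ! j) \<longleftrightarrow> \<sigma> ! i < \<sigma> ! j))"
proof
  assume l: "length \<sigma> = 3" and "contains N w \<sigma>"
  then obtain idx where h1: "\<forall>t<3. 1 \<le> idx t \<and> idx t \<le> N"
    and h2: "\<forall>a b. a < b \<and> b < 3 \<longrightarrow> idx a < idx b"
    and h3: "\<forall>a<3. \<forall>b<3. w (idx a) < w (idx b) \<longleftrightarrow> \<sigma> ! a < \<sigma> ! b" unfolding contains_def by auto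
  have e: "\<forall>i<3. [idx 0, idx 1, idx 2] ! i = idx i" by (simp add: all3)
  show "\<exists>a b c. 1 \<le> a \<and> a < b \<and> b < c \<and> c \<le> N \<and>
    (\<forall>i<3. \<forall>j<3. w ([a,b,c] ! i) < w ([a,b,c] ! j) \<longleftrightarrow> \<sigma> ! i < \<sigma> ! j)"
    apply (rule exI[of _ "idx 0"], rule exI[of _ "idx 1"], rule exI[of _ "idx 2"])
    using h1 h2 h3 e unfolding all3 all3b by simp
next
  assume l: "length \<sigma> = 3" and "\<exists>a b c. 1 \<le> a \<and> a < b \<and> b < c \<and> c \<le> N \<and>
    (\<forall>i<3. \<forall>j<3. w ([a,b,c] ! i) < w ([a,b,c] ! j) \<longleftrightarrow> \<sigma> ! i < \<sigma> ! j)"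
  then obtain a b c where h: "1 \<le> a" "a < b" "b < c" "c \<le> N"
    "\<forall>i<3. \<forall>j<3. w ([a,b,c] ! i) < w ([a,b,c] ! j) \<longleftrightarrow> \<sigma> ! i < \<sigma> ! j" by blast
  show "contains N w \<sigma>" unfolding contains_def l
    apply (rule exI[of _ "\<lambda>t. [a,b,c] ! t"])
    using h unfolding all3 all3b by simp
qed

lemma c321: "contains N w [3,2,1] \<longleftrightarrow> (\<exists>a b c. 1 \<le> a \<and> a < b \<and> b < c \<and> c \<le> N \<and> w c < w b \<and> w b < w a)"
proof -
  have "contains N w [3,2,1] \<longleftrightarrow> (\<exists>a b c. 1 \<le> a \<and> a < b \<and> b < c \<and> c \<le> N \<and>
    (\<forall>i<3. \<forall>j<3. w ([a,b,c] ! i) < w ([a,b,c] ! j) \<longleftrightarrow> ([3,2,1]::nat list) ! i < ([3,2,1]::nat list) ! j))" by (rule contains3) simp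
  also have "\<dots> \<longleftrightarrow> (\<exists>a b c. 1 \<le> a \<and> a < b \<and> b < c \<and> c \<le> N \<and> w c < w b \<and> w b < w a)"
    by (intro ex_cong1 conj_cong refl) (auto simp: all3)
  finally show ?thesis .
qed

lemma c231: "contains N w [2,3,1] \<longleftrightarrow> (\<exists>a b c. 1 \<le> a \<and> a < b \<and> b < c \<and> c \<le> N \<and> w c < w a \<and> w a < w b)"
proof -
  have "contains N w [2,3,1] \<longleftrightarrow> (\<exists>a b c. 1 \<le> a \<and> a < b \<and> b < c \<and> c \<le> N \<and>
    (\<forall>i<3. \<forall>j<3. w ([a,b,c] ! i) < w ([a,b,c] ! j) \<longleftrightarrow> ([2,3,1]::nat list) ! i < ([2,3,1]::nat list) ! j))" by (rule contains3) simp
  also have "\<dots> \<longleftrightarrow> (\<exists>a b c. 1 \<le> a \<and> a < b \<and> b < c \<and> c \<le> N \<and> w c < w a \<and> w a < w b)"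
    by (intro ex_cong1 conj_cong refl) (auto simp: all3)
  finally show ?thesis .
qed

lemma last_diff:
  assumes v: "v \<in> perms N" and w: "w \<in> perms N" and ne: "v \<noteq> w"
  shows "\<exists>q. 1 \<le> q \<and> q \<le> N \<and> v q \<noteq> w q \<and> (\<forall>k. q < k \<and> k \<le> N \<longrightarrow> v k = w k)"
proof -
  obtain t where t: "v t \<noteq> w t" using ne by auto
  have tD: "t \<in> {1..N}"
  proof (rule ccontr)
    assume tn: "t \<notin> {1..N}"
    have "v permutes {1..N}" "w permutes {1..N}" using v w by (auto simp: perms_def)
    hence "v t = t" "w t = t" using permutes_not_in tn by metis+
    thus False using t by simp
  qed
  define D where "D = {q \<in> {1..N}. v q \<noteq> w q}"
  have fD: "finite D" unfolding D_def by auto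
  have "t \<in> D" using t tD unfolding D_def by auto
  hence neD: "D \<noteq> {}" by auto
  define q where "q = Max D"
  have qD: "q \<in> D" unfolding q_def using Max_in[OF fD neD] .
  have mx: "\<And>k. k \<in> D \<Longrightarrow> k \<le> q" unfolding q_def using Max_ge[OF fD] by auto
  have "\<forall>k. q < k \<and> k \<le> N \<longrightarrow> v k = w k"
  proof (intro allI impI)
    fix k assume k: "q < k \<and> k \<le> N"
    show "v k = w k"
    proof (rule ccontr)
      assume "v k \<noteq> w k"
      hence "k \<in> D" using k qD unfolding D_def by auto
      thus False using mx k by fastforce
    qed
  qed
  thus ?thesis using qD unfolding D_def by auto
qed

lemma core_common:
  assumes v: "v \<in> perms N" and w: "w \<in> perms N"
    and g: "\<forall>j. 1 \<le> j \<and> j \<le> N \<longrightarrow> gm N v j = gm N w j" and q: "1 \<le> q" "q \<le> N"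
    and lt: "v q < w q" and ag: "\<forall>k. q < k \<and> k \<le> N \<longrightarrow> v k = w k"
  shows "\<exists>z. q < z \<and> z \<le> N \<and> v z < v q \<and> w z = v z"
proof -
  have "nr N v q"
  proof (rule ccontr)
    assume "\<not> nr N v q"
    hence "v q = w q" using same_nr(2)[OF v w g q] by simp
    thus False using lt by simp
  qed
  then obtain z where "q < z" "z \<le> N" "v z < v q" by (auto simp: nr_def)
  thus ?thesis using ag by auto
qed

lemma core321:
  assumes v: "v \<in> perms N" and w: "w \<in> perms N"
    and g: "\<forall>j. 1 \<le> j \<and> j \<le> N \<longrightarrow> gm N v j = gm N w j" and q: "1 \<le> q" "q \<le> N"
    and lt: "v q < w q" and ag: "\<forall>k. q < k \<and> k \<le> N \<longrightarrow> v k = w k"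
  shows "contains N v [3,2,1]"
proof -
  obtain z where z: "q < z" "z \<le> N" "v z < v q" using core_common[OF assms] by blast
  have vp: "v permutes {1..N}" and wp: "w permutes {1..N}" using v w by (auto simp: perms_def)
  have "w q \<in> {1..N}" using permutes_in_image[OF wp] q by auto
  hence "w q \<in> v ` {1..N}" using permutes_image[OF vp] by simp
  then obtain q' where q': "q' \<in> {1..N}" "v q' = w q" by auto
  have "q' \<noteq> q" using q' lt by auto
  moreover have "\<not> q < q'"
  proof
    assume "q < q'"
    hence "w q' = w q" using ag q' by auto
    hence "q' = q" using permutes_inj[OF wp] by (simp add: inj_eq)
    thus False using \<open>q < q'\<close> by simp
  qed
  ultimately have "q' < q" by simp
  thus ?thesis unfolding c321 using q' z lt by (intro exI[of _ q'] exI[of _ q] exI[of _ z]) auto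
qed

lemma core231:
  assumes v: "v \<in> perms N" and w: "w \<in> perms N"
    and g: "\<forall>j. 1 \<le> j \<and> j \<le> N \<longrightarrow> gm N v j = gm N w j" and q: "1 \<le> q" "q \<le> N"
    and lt: "v q < w q" and ag: "\<forall>k. q < k \<and> k \<le> N \<longrightarrow> v k = w k"
  shows "contains N w [2,3,1]"
proof -
  obtain z where z: "q < z" "z \<le> N" "v z < v q" "w z = v z" using core_common[OF assms] by blast
  have vp: "v permutes {1..N}" and wp: "w permutes {1..N}" using v w by (auto simp: perms_def)
  have "v q \<in> {1..N}" using permutes_in_image[OF vp] q by auto
  hence "v q \<in> w ` {1..N}" using permutes_image[OF wp] by simp
  then obtain q' where q': "q' \<in> {1..N}" "w q' = v q" by auto
  have "q' \<noteq> q" using q' lt by auto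
  moreover have "\<not> q < q'"
  proof
    assume "q < q'"
    hence "v q' = v q" using ag q' by auto
    hence "q' = q" using permutes_inj[OF vp] by (simp add: inj_eq)
    thus False using \<open>q < q'\<close> by simp
  qed
  ultimately have "q' < q" by simp
  thus ?thesis unfolding c231 using q' z lt by (intro exI[of _ q'] exI[of _ q] exI[of _ z]) auto
qed

theorem mainTheorem1:
  fixes N :: nat and m :: "nat list set"
  assumes "N \<ge> 1" and "m \<in> monoidM N" and "fiber N m \<noteq> {}"
  shows "(\<exists>!w. w \<in> fiber N m \<and> avoids N w [3,2,1])
       \<and> (\<forall>w \<in> fiber N m. avoids N w [3,2,1] \<longrightarrow> (\<forall>v \<in> fiber N m. len N w \<le> len N v))
       \<and> (\<exists>!w. w \<in> fiber N m \<and> avoids N w [2,3,1])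
       \<and> (\<forall>w \<in> fiber N m. avoids N w [2,3,1] \<longrightarrow> (\<forall>v \<in> fiber N m. len N v \<le> len N w))"
proof -
  define F where "F = fiber N m"
  obtain w0 where w0: "w0 \<in> F" using assms(3) unfolding F_def by auto
  have Fc: "F = {w \<in> perms N. \<forall>j. 1 \<le> j \<and> j \<le> N \<longrightarrow> gm N w j = gm N w0 j}"
    unfolding F_def by (rule fiber_char[OF assms(2) w0[unfolded F_def]])
  have perm: "\<And>v. v \<in> F \<Longrightarrow> v \<in> perms N" using Fc by auto
  have same: "\<And>v w. v \<in> F \<Longrightarrow> w \<in> F \<Longrightarrow> \<forall>j. 1 \<le> j \<and> j \<le> N \<longrightarrow> gm N v j = gm N w j"
    using Fc by auto
  have finF: "finite F"
  proof (rule finite_subset)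
    show "F \<subseteq> perms N" using perm by auto
    show "finite (perms N)" unfolding perms_def by (rule finite_permutations) simp
  qed
  have swapF: "\<And>v a b c. v \<in> F \<Longrightarrow> 1 \<le> a \<Longrightarrow> a < b \<Longrightarrow> b < c \<Longrightarrow> c \<le> N \<Longrightarrow> v c < v a \<Longrightarrow> v c < v b
      \<Longrightarrow> v \<circ> Transposition.transpose a b \<in> F"
  proof -
    fix v a b c assume h: "v \<in> F" "1 \<le> a" "a < b" "b < c" "c \<le> N" "v c < v a" "v c < v b"
    have "v \<circ> Transposition.transpose a b \<in> perms N" using h perm by (intro swap_perm) auto
    moreover have "\<forall>j. 1 \<le> j \<and> j \<le> N \<longrightarrow> gm N (v \<circ> Transposition.transpose a b) j = gm N w0 j"
      using swap_gm[of a b c N v] h Fc by auto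
    ultimately show "v \<circ> Transposition.transpose a b \<in> F" using Fc by auto
  qed
  have uniq321: "\<And>v w. v \<in> F \<Longrightarrow> w \<in> F \<Longrightarrow> avoids N v [3,2,1] \<Longrightarrow> avoids N w [3,2,1] \<Longrightarrow> v = w"
  proof (rule ccontr)
    fix v w assume h: "v \<in> F" "w \<in> F" "avoids N v [3,2,1]" "avoids N w [3,2,1]" "v \<noteq> w"
    obtain q where q: "1 \<le> q" "q \<le> N" "v q \<noteq> w q" "\<forall>k. q < k \<and> k \<le> N \<longrightarrow> v k = w k"
      using last_diff[OF perm[OF h(1)] perm[OF h(2)] h(5)] by blast
    show False
    proof (cases "v q < w q")
      case True
      have "contains N v [3,2,1]" using core321[OF perm[OF h(1)] perm[OF h(2)] same[OF h(1,2)] q(1,2) True q(4)] .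
      thus False using h(3) by (simp add: avoids_def)
    next
      case False
      hence "w q < v q" using q(3) by simp
      moreover have "\<forall>k. q < k \<and> k \<le> N \<longrightarrow> w k = v k" using q(4) by simp
      ultimately have "contains N w [3,2,1]" using core321[OF perm[OF h(2)] perm[OF h(1)] same[OF h(2,1)] q(1,2)] by blast
      thus False using h(4) by (simp add: avoids_def)
    qed
  qed
  have uniq231: "\<And>v w. v \<in> F \<Longrightarrow> w \<in> F \<Longrightarrow> avoids N v [2,3,1] \<Longrightarrow> avoids N w [2,3,1] \<Longrightarrow> v = w"
  proof (rule ccontr)
    fix v w assume h: "v \<in> F" "w \<in> F" "avoids N v [2,3,1]" "avoids N w [2,3,1]" "v \<noteq> w"
    obtain q where q: "1 \<le> q" "q \<le> N" "v q \<noteq> w q" "\<forall>k. q < k \<and> k \<le> N \<longrightarrow> v k = w k"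
      using last_diff[OF perm[OF h(1)] perm[OF h(2)] h(5)] by blast
    show False
    proof (cases "v q < w q")
      case True
      have "contains N w [2,3,1]" using core231[OF perm[OF h(1)] perm[OF h(2)] same[OF h(1,2)] q(1,2) True q(4)] .
      thus False using h(4) by (simp add: avoids_def)
    next
      case False
      hence "w q < v q" using q(3) by simp
      moreover have "\<forall>k. q < k \<and> k \<le> N \<longrightarrow> w k = v k" using q(4) by simp
      ultimately have "contains N v [2,3,1]" using core231[OF perm[OF h(2)] perm[OF h(1)] same[OF h(2,1)] q(1,2)] by blast
      thus False using h(3) by (simp add: avoids_def)
    qed
  qed
  have neL: "len N ` F \<noteq> {}" using w0 by auto
  have fL: "finite (len N ` F)" using finF by simp
  obtain wmin where wmin: "wmin \<in> F" "len N wmin = Min (len N ` F)" using Min_in[OF fL neL] by auto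
  have minle: "\<And>v. v \<in> F \<Longrightarrow> len N wmin \<le> len N v" using wmin(2) fL by simp
  obtain wmax where wmax: "wmax \<in> F" "len N wmax = Max (len N ` F)" using Max_in[OF fL neL] by auto
  have maxge: "\<And>v. v \<in> F \<Longrightarrow> len N v \<le> len N wmax" using wmax(2) fL by simp
  have amin: "avoids N wmin [3,2,1]"
  proof (rule ccontr)
    assume "\<not> avoids N wmin [3,2,1]"
    then obtain a b c where abc: "1 \<le> a" "a < b" "b < c" "c \<le> N" "wmin c < wmin b" "wmin b < wmin a"
      unfolding avoids_def c321 by blast
    have "wmin \<circ> Transposition.transpose a b \<in> F" using swapF[OF wmin(1) abc(1-4)] abc(5,6) by simp
    moreover have "len N (wmin \<circ> Transposition.transpose a b) < len N wmin"
      using abc by (intro swap_len) auto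
    ultimately show False using minle by fastforce
  qed
  have amax: "avoids N wmax [2,3,1]"
  proof (rule ccontr)
    assume "\<not> avoids N wmax [2,3,1]"
    then obtain a b c where abc: "1 \<le> a" "a < b" "b < c" "c \<le> N" "wmax c < wmax a" "wmax a < wmax b"
      unfolding avoids_def c231 by blast
    define v where "v = wmax \<circ> Transposition.transpose a b"
    have vF: "v \<in> F" unfolding v_def using swapF[OF wmax(1) abc(1-4)] abc(5,6) by simp
    have "len N (v \<circ> Transposition.transpose a b) < len N v"
      using abc unfolding v_def by (intro swap_len) auto
    moreover have "v \<circ> Transposition.transpose a b = wmax" unfolding v_def
      by (simp add: comp_assoc)
    ultimately show False using maxge[OF vF] by simp
  qed
  show ?thesis unfolding F_def[symmetric]
  proof (intro conjI)
    show "\<exists>!w. w \<in> F \<and> avoids N w [3,2,1]" using wmin amin uniq321 by blast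
    show "\<forall>w\<in>F. avoids N w [3,2,1] \<longrightarrow> (\<forall>v\<in>F. len N w \<le> len N v)"
      using wmin amin uniq321 minle by metis
    show "\<exists>!w. w \<in> F \<and> avoids N w [2,3,1]" using wmax amax uniq231 by blast
    show "\<forall>w\<in>F. avoids N w [2,3,1] \<longrightarrow> (\<forall>v\<in>F. len N v \<le> len N w)"
      using wmax amax uniq231 maxge by metis
  qed
qed


end
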